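(* Let $k\subset K$ be differential fields of characteristic zero with the same field of constants $C$, assumed algebraically closed, and assume there is $x\in k$ with $x'=1$. Let $f_1,\dots,f_n\in K$ be iterated integrals over $k$. If $f_1,\dots,f_n$ are algebraically dependent over $k$, then there exist $u_1,\dots,u_n\in k$, not all zero, such that $u_1f_1+\cdots+u_nf_n\in k$.
   Context: An element $f\in K$ is an iterated integral over $k$ if $f^{(m)}\in k$ for some $m\in\mathbb{N}$. Here $k$ need not be algebraically closed. *)

theory Defs
  imports "HOL-Computational_Algebra.Polynomial"
begin

text \<open>A derivation on the whole field type: the ambient differential field K is the type 'a.\<close>
definition derivation :: "('a::field \<Rightarrow> 'a) \<Rightarrow> bool" where
  "derivation D \<longleftrightarrow> (\<forall>a b. D (a + b) = D a + D b) \<and> (\<forall>a b. D (a * b) = D a * b + a * D b)"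

definition is_subfield :: "'a::field set \<Rightarrow> bool" where
  "is_subfield k \<longleftrightarrow> 0 \<in> k \<and> 1 \<in> k \<and> (\<forall>a\<in>k. \<forall>b\<in>k. a + b \<in> k \<and> a * b \<in> k)
     \<and> (\<forall>a\<in>k. - a \<in> k) \<and> (\<forall>a\<in>k. inverse a \<in> k)"

definition differential_subfield :: "('a::field \<Rightarrow> 'a) \<Rightarrow> 'a set \<Rightarrow> bool" where
  "differential_subfield D k \<longleftrightarrow> is_subfield k \<and> (\<forall>a\<in>k. D a \<in> k)"

definition constants :: "('a::field \<Rightarrow> 'a) \<Rightarrow> 'a set" where
  "constants D = {c. D c = 0}"

definition alg_closed_set :: "'a::field set \<Rightarrow> bool" where
  "alg_closed_set C \<longleftrightarrow> (\<forall>p :: 'a poly. (\<forall>i. coeff p i \<in> C) \<longrightarrow> degree p > 0 \<longrightarrow> (\<exists>z\<in>C. poly p z = 0))"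

definition iterated_integral :: "('a::field \<Rightarrow> 'a) \<Rightarrow> 'a set \<Rightarrow> 'a \<Rightarrow> bool" where
  "iterated_integral D k f \<longleftrightarrow> (\<exists>m::nat. (D ^^ m) f \<in> k)"

text \<open>A polynomial is a finite set S of exponent
  vectors (supported in {..<n}) with coefficients c.\<close>
definition alg_dependent :: "'a::field set \<Rightarrow> nat \<Rightarrow> (nat \<Rightarrow> 'a) \<Rightarrow> bool" where
  "alg_dependent k n f \<longleftrightarrow> (\<exists>(S :: (nat \<Rightarrow> nat) set) (c :: (nat \<Rightarrow> nat) \<Rightarrow> 'a).
      finite S \<and> (\<forall>e\<in>S. \<forall>i\<ge>n. e i = 0) \<and> (\<forall>e\<in>S. c e \<in> k) \<and> (\<exists>e\<in>S. c e \<noteq> 0)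
      \<and> (\<Sum>e\<in>S. c e * (\<Prod>i<n. f i ^ e i)) = 0)"

end

theory Submission
  imports Defs
begin

definition sring :: "'a::field set \<Rightarrow> bool" where
  "sring B \<longleftrightarrow> 0 \<in> B \<and> 1 \<in> B \<and> (\<forall>a\<in>B. \<forall>b\<in>B. a + b \<in> B \<and> a * b \<in> B) \<and> (\<forall>a\<in>B. - a \<in> B)"

definition radj :: "'a::field set \<Rightarrow> 'a \<Rightarrow> 'a set" where
  "radj B a = {poly Q a | Q. \<forall>i. coeff Q i \<in> B}"

fun Aset :: "'a::field set \<Rightarrow> (nat \<Rightarrow> 'a) \<Rightarrow> nat \<Rightarrow> 'a set" where
  "Aset k g 0 = k"
| "Aset k g (Suc m) = radj (Aset k g m) (g m)"

definition transc :: "'a::field set \<Rightarrow> 'a \<Rightarrow> bool" where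
  "transc B a \<longleftrightarrow> (\<forall>Q. (\<forall>i. coeff Q i \<in> B) \<and> poly Q a = 0 \<longrightarrow> Q = 0)"

definition Ind :: "'a::field set \<Rightarrow> nat \<Rightarrow> (nat \<Rightarrow> 'a) \<Rightarrow> bool" where
  "Ind k N g \<longleftrightarrow> (\<forall>j<N. transc (Aset k g j) (g j))"

lemma sringD:
  assumes "sring B"
  shows "0 \<in> B" "1 \<in> B" "a \<in> B \<Longrightarrow> b \<in> B \<Longrightarrow> a + b \<in> B"
    "a \<in> B \<Longrightarrow> b \<in> B \<Longrightarrow> a * b \<in> B" "a \<in> B \<Longrightarrow> - a \<in> B"
  using assms unfolding sring_def by auto

lemma sring_diff: "sring B \<Longrightarrow> a \<in> B \<Longrightarrow> b \<in> B \<Longrightarrow> a - b \<in> B"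
  using sringD[of B] by (metis diff_conv_add_uminus)

lemma sring_sum: "sring B \<Longrightarrow> (\<And>x. x \<in> A \<Longrightarrow> f x \<in> B) \<Longrightarrow> sum f A \<in> B"
  by (induction A rule: infinite_finite_induct) (auto intro: sringD)

lemma sring_prod: "sring B \<Longrightarrow> (\<And>x. x \<in> A \<Longrightarrow> f x \<in> B) \<Longrightarrow> prod f A \<in> B"
  by (induction A rule: infinite_finite_induct) (auto intro: sringD)

lemma sring_power: "sring B \<Longrightarrow> a \<in> B \<Longrightarrow> a ^ n \<in> B"
  by (induction n) (auto intro: sringD)

lemma sring_of_nat: "sring B \<Longrightarrow> of_nat n \<in> B"
  by (induction n) (auto intro: sringD)

lemma radj_base: "sring B \<Longrightarrow> b \<in> B \<Longrightarrow> b \<in> radj B a"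
  unfolding radj_def
  by (rule CollectI, rule exI[of _ "[:b:]"]) (auto simp: coeff_pCons split: nat.splits intro: sringD)

lemma radj_gen: "sring B \<Longrightarrow> a \<in> radj B a"
  unfolding radj_def
  by (rule CollectI, rule exI[of _ "[:0, 1:]"]) (auto simp: coeff_pCons split: nat.splits intro: sringD)

lemma radj_sring: assumes "sring B" shows "sring (radj B a)"
proof -
  have R0: "0 \<in> B" and Rp: "\<And>x y. x \<in> B \<Longrightarrow> y \<in> B \<Longrightarrow> x + y \<in> B"
    and Rm: "\<And>x y. x \<in> B \<Longrightarrow> y \<in> B \<Longrightarrow> x * y \<in> B" using sringD[OF assms] by auto
  have add: "p + q \<in> radj B a" if pa: "p \<in> radj B a" and qa: "q \<in> radj B a" for p q
  proof -
    obtain P where P: "p = poly P a" "\<forall>i. coeff P i \<in> B"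
      using pa unfolding radj_def by auto
    obtain Q where "q = poly Q a" "\<forall>i. coeff Q i \<in> B"
      using qa unfolding radj_def by auto
    then show ?thesis using P unfolding radj_def
      by (intro CollectI exI[of _ "P + Q"]) (auto intro: sringD[OF assms])
  qed
  have mult: "p * q \<in> radj B a" if pa: "p \<in> radj B a" and qa: "q \<in> radj B a" for p q
  proof -
    obtain P where P: "p = poly P a" "\<forall>i. coeff P i \<in> B"
      using pa unfolding radj_def by auto
    obtain Q where "q = poly Q a" "\<forall>i. coeff Q i \<in> B"
      using qa unfolding radj_def by auto
    then show ?thesis using P unfolding radj_def
      by (intro CollectI exI[of _ "P * Q"]) (auto intro: coeff_mult_semiring_closed[OF R0 Rp Rm])
  qed
  have neg: "- p \<in> radj B a" if pa: "p \<in> radj B a" for p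
  proof -
    obtain P where "p = poly P a" "\<forall>i. coeff P i \<in> B"
      using pa unfolding radj_def by auto
    then show ?thesis unfolding radj_def
      by (intro CollectI exI[of _ "- P"]) (auto intro: sringD[OF assms])
  qed
  show ?thesis unfolding sring_def using add mult neg radj_base[OF assms] sringD[OF assms] by auto
qed

lemma Aset_sring: "sring k \<Longrightarrow> sring (Aset k g m)"
  by (induction m) (auto intro: radj_sring)

lemma Aset_base: "sring k \<Longrightarrow> k \<subseteq> Aset k g m"
proof (induction m)
  case (Suc m) then show ?case using radj_base[OF Aset_sring[OF Suc.prems]] by auto
qed auto

lemma Aset_mono0: "sring k \<Longrightarrow> Aset k g m \<subseteq> Aset k g (m + d)"
proof (induction d)
  case (Suc d) then show ?case using radj_base[OF Aset_sring[OF \<open>sring k\<close>]] by auto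
qed auto

lemma Aset_mono: "sring k \<Longrightarrow> m \<le> m' \<Longrightarrow> Aset k g m \<subseteq> Aset k g m'"
  using Aset_mono0[of k g m "m' - m"] by auto

lemma Aset_gen: "sring k \<Longrightarrow> p < q \<Longrightarrow> g p \<in> Aset k g q"
  using Aset_mono[of k "Suc p" q g] radj_gen[OF Aset_sring[of k g p], of "g p"] by auto

lemma Aset_cong: "(\<And>i. i < m \<Longrightarrow> g i = g' i) \<Longrightarrow> Aset k g m = Aset k g' m"
  by (induction m) auto

lemma Ind_cong: "(\<And>i. i < N \<Longrightarrow> g i = g' i) \<Longrightarrow> Ind k N g = Ind k N g'"
  unfolding Ind_def using Aset_cong[of _ g g' k] by (metis (no_types, lifting) order.strict_trans)

lemma Ind_prefix: "Ind k N g \<Longrightarrow> n \<le> N \<Longrightarrow> Ind k n g"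
  unfolding Ind_def by auto

lemma Ind_Suc: "Ind k (Suc N) g \<longleftrightarrow> Ind k N g \<and> transc (Aset k g N) (g N)"
  unfolding Ind_def by (auto simp: less_Suc_eq)

lemma transc_mono: "B \<subseteq> B' \<Longrightarrow> transc B' a \<Longrightarrow> transc B a"
  unfolding transc_def by blast

lemma transc_affine:
  assumes "sring B" "transc B a" "b \<in> B" "c \<in> B" "b \<noteq> 0"
  shows "transc B (b * a + c)"
  unfolding transc_def
proof (intro allI impI)
  fix Q assume Q: "(\<forall>i. coeff Q i \<in> B) \<and> poly Q (b * a + c) = 0"
  have R0: "0 \<in> B" and Rp: "\<And>x y. x \<in> B \<Longrightarrow> y \<in> B \<Longrightarrow> x + y \<in> B"
    and Rm: "\<And>x y. x \<in> B \<Longrightarrow> y \<in> B \<Longrightarrow> x * y \<in> B" using sringD[OF assms(1)] by auto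
  have cq: "coeff [:c, b:] i \<in> B" for i
    using assms R0 by (auto simp: coeff_pCons split: nat.splits)
  have "\<forall>i. coeff (pcompose Q [:c, b:]) i \<in> B"
    using coeff_pcompose_semiring_closed[OF R0 Rp Rm] Q cq by blast
  moreover have "poly (pcompose Q [:c, b:]) a = 0"
    using Q by (simp add: poly_pcompose algebra_simps)
  ultimately have "pcompose Q [:c, b:] = 0" using assms(2) unfolding transc_def by blast
  then show "Q = 0" using pcompose_eq_0 assms(5) by fastforce
qed


lemma radj_choose:
  assumes "\<forall>i. coeff P i \<in> radj B a"
  obtains Qf where "\<And>i. coeff P i = poly (Qf i) a" "\<And>i j. coeff (Qf i) j \<in> B"
proof -
  have "\<forall>i. \<exists>Q. coeff P i = poly Q a \<and> (\<forall>j. coeff Q j \<in> B)"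
    using assms unfolding radj_def by blast
  then obtain Qf where "\<forall>i. coeff P i = poly (Qf i) a \<and> (\<forall>j. coeff (Qf i) j \<in> B)"
    by metis
  then show ?thesis using that by blast
qed

lemma swap_sum_poly:
  fixes P :: "'a::field poly"
  assumes "\<And>i. coeff P i = poly (Qf i) a"
  shows "poly (\<Sum>i\<le>degree P. smult (b ^ i) (Qf i)) a = poly P b"
proof -
  have "poly (\<Sum>i\<le>degree P. smult (b ^ i) (Qf i)) a = (\<Sum>i\<le>degree P. b ^ i * poly (Qf i) a)"
    by (simp add: poly_sum)
  also have "\<dots> = (\<Sum>i\<le>degree P. coeff P i * b ^ i)"
    using assms by (simp add: mult.commute)
  also have "\<dots> = poly P b" by (simp add: poly_altdef)
  finally show ?thesis .
qed

lemma radj_comm_sub: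
  assumes B: "sring B"
  shows "radj (radj B a) b \<subseteq> radj (radj B b) a"
proof
  fix y assume "y \<in> radj (radj B a) b"
  then obtain P where P: "y = poly P b" "\<forall>i. coeff P i \<in> radj B a"
    unfolding radj_def by auto
  obtain Qf where Q: "\<And>i. coeff P i = poly (Qf i) a" "\<And>i j. coeff (Qf i) j \<in> B"
    using radj_choose[OF P(2)] by blast
  define R where "R = (\<Sum>i\<le>degree P. smult (b ^ i) (Qf i))"
  have "poly R a = y" unfolding R_def using swap_sum_poly[OF Q(1)] P(1) by simp
  moreover have "coeff R j \<in> radj B b" for j
  proof -
    have S: "sring (radj B b)" by (rule radj_sring[OF B])
    have "coeff R j = (\<Sum>i\<le>degree P. b ^ i * coeff (Qf i) j)"
      unfolding R_def by (simp add: coeff_sum)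
    also have "\<dots> \<in> radj B b"
      by (intro sring_sum[OF S] sringD(4)[OF S] sring_power[OF S] radj_gen[OF B]
          radj_base[OF B] Q(2))
    finally show ?thesis .
  qed
  ultimately show "y \<in> radj (radj B b) a" unfolding radj_def by blast
qed

lemma radj_comm: "sring B \<Longrightarrow> radj (radj B a) b = radj (radj B b) a"
  using radj_comm_sub by blast

lemma transc_swap:
  assumes B: "sring B" and ta: "transc B a" and tb: "transc (radj B a) b"
  shows "transc (radj B b) a"
  unfolding transc_def
proof (intro allI impI)
  fix P assume asm: "(\<forall>i. coeff P i \<in> radj B b) \<and> poly P a = 0"
  obtain Qf where Q: "\<And>i. coeff P i = poly (Qf i) b" "\<And>i j. coeff (Qf i) j \<in> B"
    using radj_choose[of P B b] asm by blast
  define R where "R = (\<Sum>i\<le>degree P. smult (a ^ i) (Qf i))"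
  have pR: "poly R b = 0" unfolding R_def using swap_sum_poly[OF Q(1)] asm by simp
  have cR: "coeff R j = (\<Sum>i\<le>degree P. a ^ i * coeff (Qf i) j)" for j
    unfolding R_def by (simp add: coeff_sum)
  have "coeff R j \<in> radj B a" for j
  proof -
    have S: "sring (radj B a)" by (rule radj_sring[OF B])
    show ?thesis unfolding cR
      by (intro sring_sum[OF S] sringD(4)[OF S] sring_power[OF S] radj_gen[OF B]
          radj_base[OF B] Q(2))
  qed
  then have "R = 0" using tb pR unfolding transc_def by blast
  then have z: "(\<Sum>i\<le>degree P. a ^ i * coeff (Qf i) j) = 0" for j
    using cR[of j] by simp
  have "coeff (Qf i) j = 0" if "i \<le> degree P" for i j
  proof -
    define S where "S = (\<Sum>i\<le>degree P. monom (coeff (Qf i) j) i)"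
    have "poly S a = (\<Sum>i\<le>degree P. coeff (Qf i) j * a ^ i)"
      unfolding S_def by (simp add: poly_sum poly_monom)
    then have "poly S a = 0" using z[of j] by (simp add: mult.commute)
    moreover have cS: "coeff S l = (if l \<le> degree P then coeff (Qf l) j else 0)" for l
      unfolding S_def by (simp add: coeff_sum)
    moreover have "coeff S l \<in> B" for l using cS[of l] Q(2) sringD(1)[OF B] by simp
    ultimately have "S = 0" using ta unfolding transc_def by blast
    then show ?thesis using cS[of i] that by simp
  qed
  then have "Qf i = 0" if "i \<le> degree P" for i using that by (simp add: poly_eq_iff)
  then have "coeff P i = 0" for i
    using Q(1)[of i] coeff_eq_0[of P i] by (cases "i \<le> degree P") auto
  then show "P = 0" by (simp add: poly_eq_iff)
qed

definition swp :: "nat \<Rightarrow> (nat \<Rightarrow> 'a) \<Rightarrow> nat \<Rightarrow> 'a" where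
  "swp j g = g(j := g (Suc j), Suc j := g j)"

lemma Aset_swp_high:
  assumes "sring k" "Suc (Suc j) \<le> p"
  shows "Aset k (swp j g) p = Aset k g p"
  using assms(2)
proof (induction p rule: dec_induct)
  case base
  have e: "Aset k (swp j g) j = Aset k g j" by (rule Aset_cong) (auto simp: swp_def)
  have s1: "swp j g j = g (Suc j)" "swp j g (Suc j) = g j" by (auto simp: swp_def)
  have "Aset k (swp j g) (Suc (Suc j)) = radj (radj (Aset k (swp j g) j) (swp j g j)) (swp j g (Suc j))"
    by simp
  also have "\<dots> = radj (radj (Aset k g j) (g (Suc j))) (g j)" by (simp only: e s1)
  also have "\<dots> = Aset k g (Suc (Suc j))"
    using radj_comm[OF Aset_sring[OF assms(1), of g j], of "g j" "g (Suc j)"] by simp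
  finally show ?case .
next
  case (step n)
  then show ?case by (simp add: swp_def)
qed

lemma Ind_swp:
  assumes k: "sring k" and I: "Ind k N g" and j: "Suc j < N"
  shows "Ind k N (swp j g)"
  unfolding Ind_def
proof (intro allI impI)
  fix p assume p: "p < N"
  have e: "Aset k (swp j g) j = Aset k g j" by (rule Aset_cong) (auto simp: swp_def)
  have tj: "transc (Aset k g j) (g j)" and tj1: "transc (Aset k g (Suc j)) (g (Suc j))"
    using I j unfolding Ind_def by auto
  consider "p < j" | "p = j" | "p = Suc j" | "Suc (Suc j) \<le> p" by linarith
  then show "transc (Aset k (swp j g) p) (swp j g p)"
  proof cases
    case 1
    have "Aset k (swp j g) p = Aset k g p" by (rule Aset_cong) (use 1 in \<open>auto simp: swp_def\<close>)
    then show ?thesis using 1 I p unfolding Ind_def by (simp add: swp_def)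
  next
    case 2
    then show ?thesis using e transc_mono[OF Aset_mono[OF k, of j "Suc j" g] tj1]
      by (simp add: swp_def)
  next
    case 3
    then show ?thesis using e transc_swap[OF Aset_sring[OF k] tj] tj1
      by (simp add: swp_def)
  next
    case 4
    then show ?thesis using Aset_swp_high[OF k 4, of g] I p unfolding Ind_def
      by (simp add: swp_def)
  qed
qed

definition rot :: "nat \<Rightarrow> nat \<Rightarrow> (nat \<Rightarrow> 'a) \<Rightarrow> nat \<Rightarrow> 'a" where
  "rot m N g = (\<lambda>i. if i < m then g i else if i < N - 1 then g (Suc i) else g m)"

lemma Ind_rot0:
  assumes k: "sring k"
  shows "\<forall>m g. N - 1 - m = d \<longrightarrow> Ind k N g \<longrightarrow> m < N \<longrightarrow> Ind k N (rot m N g)"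
proof (induction d)
  case 0
  show ?case
  proof (intro allI impI)
    fix m and g :: "nat \<Rightarrow> 'a" assume a: "N - 1 - m = 0" "Ind k N g" "m < N"
    have mN: "m = N - 1" using a by linarith
    have "Ind k N (rot m N g) = Ind k N g"
    proof (intro Ind_cong)
      fix i assume "i < N"
      then show "rot m N g i = g i" using mN unfolding rot_def
        by (cases "i < m") (auto dest!: leI intro!: arg_cong[where f=g])
    qed
    then show "Ind k N (rot m N g)" using a by simp
  qed
next
  case (Suc d)
  show ?case
  proof (intro allI impI)
    fix m and g :: "nat \<Rightarrow> 'a" assume a: "N - 1 - m = Suc d" "Ind k N g" "m < N"
    have I2: "Ind k N (rot (Suc m) N (swp m g))"
      using Suc.IH a Ind_swp[OF k a(2)] by simp
    have "Ind k N (rot (Suc m) N (swp m g)) = Ind k N (rot m N g)"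
      by (intro Ind_cong) (use a in \<open>auto simp: rot_def swp_def intro!: arg_cong[where f=g]\<close>)
    then show "Ind k N (rot m N g)" using I2 by simp
  qed
qed

lemma Ind_rot: "sring k \<Longrightarrow> Ind k N g \<Longrightarrow> m < N \<Longrightarrow> Ind k N (rot m N g)"
  using Ind_rot0 by blast


definition Cind :: "('a::field \<Rightarrow> 'a) \<Rightarrow> 'a set \<Rightarrow> nat \<Rightarrow> (nat \<Rightarrow> 'a) \<Rightarrow> bool" where
  "Cind D k N h \<longleftrightarrow> (\<forall>c. (\<forall>i<N. c i \<in> constants D) \<and> (\<Sum>i<N. c i * h i) \<in> k \<longrightarrow> (\<forall>i<N. c i = 0))"

definition pD :: "('a::field_char_0 \<Rightarrow> 'a) \<Rightarrow> 'a poly \<Rightarrow> 'a \<Rightarrow> 'a poly" where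
  "pD D Q a = map_poly D Q + smult (D a) (pderiv Q)"

locale dfield =
  fixes D :: "'a::field_char_0 \<Rightarrow> 'a" and k :: "'a set"
  assumes der: "derivation D" and dsub: "differential_subfield D k" and cons: "constants D \<subseteq> k"
begin

lemma D_add: "D (a + b) = D a + D b" using der unfolding derivation_def by blast
lemma D_mult: "D (a * b) = D a * b + a * D b" using der unfolding derivation_def by blast
lemma D_0[simp]: "D 0 = 0" using D_add[of 0 0] by simp
lemma D_1[simp]: "D 1 = 0" using D_mult[of 1 1] by simp
lemma D_minus: "D (- a) = - D a" using D_add[of a "- a"] by (simp add: eq_neg_iff_add_eq_0 add.commute)
lemma D_diff: "D (a - b) = D a - D b" using D_add[of a "- b"] D_minus[of b] by simp
lemma D_sum: "D (sum f A) = (\<Sum>x\<in>A. D (f x))"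
  by (induction A rule: infinite_finite_induct) (auto simp: D_add)
lemma D_of_nat[simp]: "D (of_nat n) = 0"
  by (induction n) (auto simp: D_add)
lemma D_power: "D (a ^ Suc n) = of_nat (Suc n) * a ^ n * D a"
  by (induction n) (auto simp: D_mult algebra_simps)
lemma D_const_mult: "D c = 0 \<Longrightarrow> D (c * a) = c * D a" by (simp add: D_mult)
lemma D_inverse: assumes "a \<noteq> 0" shows "D (inverse a) = - D a * inverse a ^ 2"
proof -
  have "0 = D (a * inverse a)" using assms by simp
  also have "\<dots> = D a * inverse a + a * D (inverse a)" by (rule D_mult)
  finally have "a * D (inverse a) = - D a * inverse a" by (simp add: eq_neg_iff_add_eq_0 add.commute)
  moreover have "D (inverse a) = inverse a * (a * D (inverse a))" using assms by simp
  ultimately show ?thesis by (simp add: power2_eq_square)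
qed
lemma D_inverse_const: "D c = 0 \<Longrightarrow> D (inverse c) = 0"
  by (cases "c = 0") (auto simp: D_inverse)

lemma k_sring: "sring k"
  using dsub unfolding differential_subfield_def is_subfield_def sring_def by blast
lemma k_D: "a \<in> k \<Longrightarrow> D a \<in> k"
  using dsub unfolding differential_subfield_def by blast
lemma k_inv: "a \<in> k \<Longrightarrow> inverse a \<in> k"
  using dsub unfolding differential_subfield_def is_subfield_def by blast
lemma const_k: "D c = 0 \<Longrightarrow> c \<in> k" using cons unfolding constants_def by blast
lemma k_of_nat: "of_nat n \<in> k" using sring_of_nat[OF k_sring] .
lemma k_div: "a \<in> k \<Longrightarrow> b \<in> k \<Longrightarrow> a / b \<in> k"
  using k_inv sringD(4)[OF k_sring] by (simp add: divide_inverse)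

lemma D_poly: "D (poly Q a) = poly (map_poly D Q) a + D a * poly (pderiv Q) a"
proof (induction Q)
  case 0 then show ?case by simp
next
  case (pCons c Q)
  show ?case using pCons.IH
    by (simp add: map_poly_pCons pderiv_pCons D_add D_mult algebra_simps)
qed

lemma poly_pD: "poly (pD D Q a) a = D (poly Q a)"
  unfolding pD_def by (simp add: D_poly)

lemma coeff_pD: "coeff (pD D Q a) n = D (coeff Q n) + D a * (of_nat (Suc n) * coeff Q (Suc n))"
  unfolding pD_def by (simp add: coeff_map_poly coeff_pderiv)

lemma pD_coeffs:
  assumes "sring B" "\<forall>i. coeff Q i \<in> B" "D a \<in> B" "\<forall>b\<in>B. D b \<in> B" "k \<subseteq> B"
  shows "coeff (pD D Q a) n \<in> B"
  unfolding coeff_pD using assms k_of_nat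
  by (blast intro: sringD[OF assms(1)])

lemma radj_Dstab:
  assumes "sring B" "\<forall>b\<in>B. D b \<in> B" "D a \<in> B" "k \<subseteq> B"
  shows "\<forall>b\<in>radj B a. D b \<in> radj B a"
proof
  fix b assume "b \<in> radj B a"
  then obtain Q where Q: "b = poly Q a" "\<forall>i. coeff Q i \<in> B" unfolding radj_def by auto
  have "D b = poly (pD D Q a) a" using Q poly_pD by simp
  then show "D b \<in> radj B a" unfolding radj_def using pD_coeffs[OF assms(1) Q(2) assms(3,2,4)]
    by blast
qed

end

locale ko = dfield +
  fixes h :: "nat \<Rightarrow> 'a::field_char_0" and N :: nat
  assumes hint: "\<And>i. i < N \<Longrightarrow> D (h i) \<in> k" and cind: "Cind D k N h"
begin

abbreviation "A m \<equiv> Aset k h m"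

lemma A_sring: "sring (A m)" by (rule Aset_sring[OF k_sring])
lemma A_base: "k \<subseteq> A m" by (rule Aset_base[OF k_sring])

lemma A_stab: "m \<le> N \<Longrightarrow> \<forall>b\<in>A m. D b \<in> A m"
proof (induction m)
  case 0 then show ?case using k_D by simp
next
  case (Suc m)
  then show ?case using radj_Dstab[OF A_sring, of m "h m"] hint[of m] A_base[of m] by auto
qed

definition LinInt :: "nat \<Rightarrow> bool" where
  "LinInt m \<longleftrightarrow> (\<forall>a\<in>A m. D a \<in> k \<longrightarrow> (\<exists>c. (\<forall>i<m. D (c i) = 0) \<and> a - (\<Sum>i<m. c i * h i) \<in> k))"

definition DI :: "nat \<Rightarrow> bool" where
  "DI m \<longleftrightarrow> (\<forall>J. J \<subseteq> A m \<and> (\<forall>a\<in>J. \<forall>b\<in>J. a + b \<in> J) \<and> (\<forall>a\<in>A m. \<forall>b\<in>J. a * b \<in> J)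
      \<and> (\<forall>a\<in>J. D a \<in> J) \<and> (\<exists>a\<in>J. a \<noteq> 0) \<longrightarrow> 1 \<in> J)"

lemma Bad:
  assumes m: "m < N" and L: "LinInt m" and q: "q \<in> A m" and d: "D (h m + q) = 0"
  shows False
proof -
  have "D q = - D (h m)" using d by (simp add: D_add eq_neg_iff_add_eq_0 add.commute)
  then have "D q \<in> k" using hint[OF m] sringD(5)[OF k_sring] by simp
  then obtain c where c: "\<forall>i<m. D (c i) = 0" "q - (\<Sum>i<m. c i * h i) \<in> k"
    using L q unfolding LinInt_def by blast
  define c' where "c' i = (if i < m then c i else if i = m then 1 else 0)" for i
  have s: "(\<Sum>i<N. c' i * h i) = h m + (\<Sum>i<m. c i * h i)"
  proof -
    have "(\<Sum>i<N. c' i * h i) = (\<Sum>i<Suc m. c' i * h i)"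
      by (rule sum.mono_neutral_right) (use m in \<open>auto simp: c'_def\<close>)
    also have "\<dots> = (\<Sum>i<m. c' i * h i) + c' m * h m" by simp
    also have "\<dots> = (\<Sum>i<m. c i * h i) + h m" by (simp add: c'_def)
    finally show ?thesis by simp
  qed
  have "h m + q \<in> k" using const_k d by blast
  then have "(h m + q) - (q - (\<Sum>i<m. c i * h i)) \<in> k" using c(2) sring_diff[OF k_sring] by blast
  then have "(\<Sum>i<N. c' i * h i) \<in> k" using s by (simp add: algebra_simps)
  moreover have "\<forall>i<N. c' i \<in> constants D" using c(1) unfolding constants_def c'_def by auto
  ultimately have "c' m = 0" using cind m unfolding Cind_def by blast
  then show False by (simp add: c'_def)
qed

end


context ko
begin

lemma U:
  assumes m: "m < N" and DIm: "DI m" and L: "LinInt m"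
    and Madd: "\<forall>a\<in>M. \<forall>b\<in>M. a + b \<in> M" and Mmul: "\<forall>a\<in>A m. \<forall>b\<in>M. a * b \<in> M"
    and MD: "\<forall>a\<in>M. D a \<in> M"
    and Q0: "Q0 \<noteq> 0" "\<forall>i. coeff Q0 i \<in> A m" "poly Q0 (h m) \<in> M"
  shows "1 \<in> M"
proof -
  define x where "x = h m"
  define Pp where "Pp Q \<longleftrightarrow> (\<forall>i. coeff Q i \<in> A m) \<and> Q \<noteq> 0 \<and> poly Q x \<in> M" for Q
  define e where "e = (LEAST d. \<exists>Q. Pp Q \<and> degree Q = d)"
  have ex: "\<exists>Q. Pp Q \<and> degree Q = e" unfolding e_def
    by (rule LeastI[of _ "degree Q0"]) (use Q0 in \<open>auto simp: Pp_def x_def\<close>)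
  have emin: "e \<le> degree Q" if "Pp Q" for Q unfolding e_def by (rule Least_le) (use that in auto)
  have Bs: "sring (A m)" by (rule A_sring)
  have Bstab: "\<forall>b\<in>A m. D b \<in> A m" using A_stab m by simp
  have hA: "D x \<in> A m" using hint[OF m] A_base x_def by blast
  have Rco: "coeff (pD D Q x) n \<in> A m" if "\<forall>i. coeff Q i \<in> A m" for Q n
    by (rule pD_coeffs[OF Bs that hA Bstab A_base])
  define J where "J = insert 0 {lead_coeff Q | Q. Pp Q \<and> degree Q = e}"
  have JA: "J \<subseteq> A m" unfolding J_def Pp_def using sringD(1)[OF Bs] by auto
  have Jadd: "\<forall>a\<in>J. \<forall>b\<in>J. a + b \<in> J"
  proof (intro ballI)
    fix a b assume a: "a \<in> J" and b: "b \<in> J"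
    show "a + b \<in> J"
    proof (cases "a = 0 \<or> b = 0 \<or> a + b = 0")
      case True
      moreover have "a = 0 \<Longrightarrow> a + b \<in> J" using b by simp
      moreover have "b = 0 \<Longrightarrow> a + b \<in> J" using a by simp
      moreover have "a + b = 0 \<Longrightarrow> a + b \<in> J" unfolding J_def by simp
      ultimately show ?thesis by blast
    next
      case False
      then obtain Q1 Q2 where Q: "Pp Q1" "degree Q1 = e" "a = lead_coeff Q1"
        "Pp Q2" "degree Q2 = e" "b = lead_coeff Q2"
        using a b unfolding J_def by auto
      have c: "coeff (Q1 + Q2) e = a + b" using Q by simp
      have d: "degree (Q1 + Q2) = e"
        using degree_add_le[of Q1 e Q2] Q le_degree[of "Q1 + Q2" e] c False by simp
      have "Q1 + Q2 \<noteq> 0" using c False by (metis coeff_0)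
      then have "Pp (Q1 + Q2)" using Q Madd unfolding Pp_def
        by (auto intro: sringD(3)[OF Bs])
      then show ?thesis unfolding J_def using d c by (auto intro!: exI[of _ "Q1 + Q2"])
    qed
  qed
  have Jmul: "\<forall>a\<in>A m. \<forall>b\<in>J. a * b \<in> J"
  proof (intro ballI)
    fix a b assume a: "a \<in> A m" and b: "b \<in> J"
    show "a * b \<in> J"
    proof (cases "a * b = 0")
      case True then show ?thesis unfolding J_def by auto
    next
      case False
      then have "b \<noteq> 0" "a \<noteq> 0" by auto
      then obtain Q where Q: "Pp Q" "degree Q = e" "b = lead_coeff Q"
        using b unfolding J_def by auto
      have "Pp (smult a Q)" using Q a \<open>a \<noteq> 0\<close> Mmul unfolding Pp_def
        by (auto intro: sringD(4)[OF Bs])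
      moreover have "degree (smult a Q) = e" using Q \<open>a \<noteq> 0\<close> by simp
      ultimately show ?thesis unfolding J_def using Q \<open>a \<noteq> 0\<close>
        by (auto intro!: exI[of _ "smult a Q"])
    qed
  qed
  have JD: "\<forall>a\<in>J. D a \<in> J"
  proof
    fix a assume a: "a \<in> J"
    show "D a \<in> J"
    proof (cases "a = 0 \<or> D a = 0")
      case True then show ?thesis using a unfolding J_def by auto
    next
      case False
      then obtain Q where Q: "Pp Q" "degree Q = e" "a = lead_coeff Q"
        using a unfolding J_def by auto
      define R where "R = pD D Q x"
      have cR: "coeff R n = D (coeff Q n) + D x * (of_nat (Suc n) * coeff Q (Suc n))" for n
        unfolding R_def by (rule coeff_pD)
      have z: "coeff R n = 0" if "n > e" for n
        using that Q(2) coeff_eq_0[of Q n] coeff_eq_0[of Q "Suc n"] cR[of n] by simp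
      have ce: "coeff R e = D a" using cR[of e] Q coeff_eq_0[of Q "Suc e"] by simp
      have dR: "degree R = e" using degree_le[of e R] z le_degree[of R e] ce False by auto
      have "Pp R" unfolding Pp_def
      proof (intro conjI)
        show "\<forall>i. coeff R i \<in> A m" using Q(1) Rco unfolding Pp_def R_def by blast
        show "R \<noteq> 0" using ce False by auto
        show "poly R x \<in> M" using MD Q(1) unfolding R_def Pp_def poly_pD by blast
      qed
      moreover have "D a = lead_coeff R" using dR ce by simp
      ultimately show ?thesis unfolding J_def using dR by blast
    qed
  qed
  have Jnz: "\<exists>a\<in>J. a \<noteq> 0"
  proof -
    obtain Q where "Pp Q" "degree Q = e" using ex by blast
    then have "lead_coeff Q \<in> J" "lead_coeff Q \<noteq> 0" unfolding J_def Pp_def by auto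
    then show ?thesis by blast
  qed
  have "1 \<in> J" using DIm JA Jadd Jmul JD Jnz unfolding DI_def by blast
  then obtain Q where Q: "Pp Q" "degree Q = e" "lead_coeff Q = 1"
    unfolding J_def by auto
  show ?thesis
  proof (cases "e = 0")
    case True
    have "poly Q x = 1" using Q True by (simp add: poly_altdef)
    then show ?thesis using Q(1) unfolding Pp_def by auto
  next
    case False
    define R where "R = pD D Q x"
    have cR: "coeff R n = D (coeff Q n) + D x * (of_nat (Suc n) * coeff Q (Suc n))" for n
      unfolding R_def by (rule coeff_pD)
    have z: "coeff R n = 0" if "n \<ge> e" for n
    proof (cases "n = e")
      case True then show ?thesis using cR[of n] Q coeff_eq_0[of Q "Suc n"] by simp
    next
      case False then show ?thesis
        using that Q(2) coeff_eq_0[of Q n] coeff_eq_0[of Q "Suc n"] cR[of n] by simp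
    qed
    have "R = 0"
    proof (rule ccontr)
      assume "R \<noteq> 0"
      then have "coeff R (degree R) \<noteq> 0" by simp
      then have "degree R < e" using z by (meson not_le)
      moreover have "Pp R" unfolding Pp_def
      proof (intro conjI)
        show "\<forall>i. coeff R i \<in> A m" using Q(1) Rco unfolding Pp_def R_def by blast
        show "R \<noteq> 0" by fact
        show "poly R x \<in> M" using MD Q(1) unfolding R_def Pp_def poly_pD by blast
      qed
      ultimately show False using emin by fastforce
    qed
    then have "coeff R (e - 1) = 0" by simp
    then have eq: "D (coeff Q (e - 1)) + D x * of_nat e = 0"
      using cR[of "e - 1"] Q False by simp
    define q where "q = coeff Q (e - 1) * inverse (of_nat e)"
    have qA: "q \<in> A m" unfolding q_def using Q(1) A_base k_inv[OF k_of_nat[of e]]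
      unfolding Pp_def by (blast intro: sringD(4)[OF Bs])
    have "D q = D (coeff Q (e - 1)) * inverse (of_nat e)"
      unfolding q_def by (simp add: D_mult D_inverse_const)
    also have "\<dots> = - D x" using eq False
      by (simp add: eq_neg_iff_add_eq_0 field_simps)
    finally have "D (x + q) = 0" by (simp add: D_add)
    then show ?thesis using Bad[OF m L qA] x_def by blast
  qed
qed

end

lemma poly_deg1:
  fixes Q :: "'a::comm_semiring_1 poly"
  assumes "degree Q \<le> 1"
  shows "poly Q x = coeff Q 0 + coeff Q 1 * x"
proof -
  have "poly Q x = (\<Sum>i\<le>degree Q. coeff Q i * x ^ i)" by (rule poly_altdef)
  also have "\<dots> = (\<Sum>i\<le>1. coeff Q i * x ^ i)"
  proof (rule sum.mono_neutral_left)
    show "\<forall>i\<in>{..1} - {..degree Q}. coeff Q i * x ^ i = 0"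
      using coeff_eq_0[of Q] by (auto simp: not_le)
  qed (use assms in auto)
  finally show ?thesis by simp
qed
context ko
begin

lemma TI:
  assumes m: "m < N" and DIm: "DI m" and L: "LinInt m"
  shows "transc (A m) (h m)"
  unfolding transc_def
proof (intro allI impI)
  fix Q assume Q: "(\<forall>i. coeff Q i \<in> A m) \<and> poly Q (h m) = 0"
  show "Q = 0"
  proof (rule ccontr)
    assume "Q \<noteq> 0"
    then have "(1::'a) \<in> {0}" using U[OF m DIm L, of "{0}" Q] Q by (auto simp: D_mult)
    then show False by simp
  qed
qed

lemma DI_Suc:
  assumes m: "m < N" and DIm: "DI m" and L: "LinInt m"
  shows "DI (Suc m)"
  unfolding DI_def
proof (intro allI impI)
  fix J assume J: "J \<subseteq> A (Suc m) \<and> (\<forall>a\<in>J. \<forall>b\<in>J. a + b \<in> J) \<and> (\<forall>a\<in>A (Suc m). \<forall>b\<in>J. a * b \<in> J)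
      \<and> (\<forall>a\<in>J. D a \<in> J) \<and> (\<exists>a\<in>J. a \<noteq> 0)"
  then obtain a where a: "a \<in> J" "a \<noteq> 0" by blast
  then have "a \<in> radj (A m) (h m)" using J by auto
  then obtain Q where Q: "a = poly Q (h m)" "\<forall>i. coeff Q i \<in> A m" unfolding radj_def by auto
  have "Q \<noteq> 0" using Q a by auto
  have sub: "A m \<subseteq> A (Suc m)" using radj_base[OF A_sring] by auto
  show "1 \<in> J"
    by (rule U[OF m DIm L, of J Q]) (use J sub Q a \<open>Q \<noteq> 0\<close> in auto)
qed


lemma LI_Suc:
  assumes m: "m < N" and DIm: "DI m" and L: "LinInt m"
  shows "LinInt (Suc m)"
  unfolding LinInt_def
proof (intro ballI impI)
  define x where "x = h m"
  fix a assume a: "a \<in> A (Suc m)" "D a \<in> k"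
  then obtain Q where Q: "a = poly Q x" "\<forall>i. coeff Q i \<in> A m" by (auto simp: radj_def x_def)
  have Bs: "sring (A m)" by (rule A_sring)
  have Bstab: "\<forall>b\<in>A m. D b \<in> A m" using A_stab m by simp
  have hk: "D x \<in> k" using hint[OF m] x_def by simp
  have hA: "D x \<in> A m" using hk A_base by blast
  have cR: "coeff (pD D Q x) n = D (coeff Q n) + D x * (of_nat (Suc n) * coeff Q (Suc n))" for n
    by (rule coeff_pD)
  define R where "R = pD D Q x - [:D a:]"
  have "\<forall>i. coeff R i \<in> A m"
  proof
    fix i
    have "coeff [:D a:] i \<in> A m" using a(2) A_base sringD(1)[OF Bs]
      by (auto simp: coeff_pCons split: nat.splits)
    then show "coeff R i \<in> A m" unfolding R_def
      using pD_coeffs[OF Bs Q(2) hA Bstab A_base, of i] by (simp add: sring_diff[OF Bs])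
  qed
  moreover have "poly R x = 0" unfolding R_def using poly_pD Q(1) by simp
  ultimately have "R = 0" using TI[OF m DIm L] unfolding transc_def x_def by blast
  have cz: "D (coeff Q n) + D x * (of_nat (Suc n) * coeff Q (Suc n)) = 0" if n1: "n \<ge> 1" for n
  proof -
    obtain n' where n': "n = Suc n'" using n1 by (cases n) auto
    have "coeff R n = 0" using \<open>R = 0\<close> by simp
    moreover have "coeff [:D a:] n = 0" using n' by simp
    ultimately have "coeff (pD D Q x) n = 0" unfolding R_def by simp
    then show ?thesis using cR[of n] by simp
  qed
  show "\<exists>c. (\<forall>i<Suc m. D (c i) = 0) \<and> a - (\<Sum>i<Suc m. c i * h i) \<in> k"
  proof (cases "degree Q \<ge> 2")
    case True
    define t where "t = degree Q"
    have t1: "D (coeff Q t) = 0" using cz[of t] True coeff_eq_0[of Q "Suc t"] unfolding t_def by simp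
    have t2: "D (coeff Q (t - 1)) + D x * (of_nat t * coeff Q t) = 0"
      using cz[of "t - 1"] True unfolding t_def by (simp add: Suc_diff_Suc numeral_2_eq_2)
    have qt: "coeff Q t \<noteq> 0" using True unfolding t_def by auto
    define w where "w = of_nat t * coeff Q t"
    have w0: "w \<noteq> 0" using qt True unfolding w_def t_def by auto
    have Dw: "D w = 0" unfolding w_def using t1 by (simp add: D_mult)
    have wk: "w \<in> k" using const_k[OF Dw] .
    define r where "r = coeff Q (t - 1) * inverse w"
    have rA: "r \<in> A m" unfolding r_def using Q(2) A_base k_inv[OF wk]
      by (blast intro: sringD(4)[OF Bs])
    have "D r = D (coeff Q (t - 1)) * inverse w"
      unfolding r_def by (simp add: D_mult D_inverse_const[OF Dw])
    also have "\<dots> = - D x" using t2 w0 unfolding w_def[symmetric]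
      by (simp add: eq_neg_iff_add_eq_0 field_simps)
    finally have "D (x + r) = 0" by (simp add: D_add)
    then show ?thesis using Bad[OF m L rA] x_def by blast
  next
    case False
    then have d1: "degree Q \<le> 1" by simp
    have a01: "a = coeff Q 0 + coeff Q 1 * x" using Q(1) poly_deg1[OF d1] by simp
    have "D (coeff Q 1) = 0" using cz[of 1] coeff_eq_0[of Q 2] d1 by (simp add: numeral_2_eq_2)
    then have q1k: "coeff Q 1 \<in> k" by (rule const_k)
    have "D a = D (coeff Q 0) + coeff Q 1 * D x"
      using a01 \<open>D (coeff Q 1) = 0\<close> by (simp add: D_add D_mult)
    then have "D (coeff Q 0) = D a - coeff Q 1 * D x" by simp
    also have "\<dots> \<in> k" using a(2) q1k hk by (blast intro: sring_diff[OF k_sring] sringD(4)[OF k_sring])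
    finally obtain c where c: "\<forall>i<m. D (c i) = 0" "coeff Q 0 - (\<Sum>i<m. c i * h i) \<in> k"
      using L Q(2) unfolding LinInt_def by blast
    define c' where "c' = c(m := coeff Q 1)"
    have "(\<Sum>i<Suc m. c' i * h i) = (\<Sum>i<m. c i * h i) + coeff Q 1 * x"
    proof -
      have s1: "(\<Sum>i<m. c' i * h i) = (\<Sum>i<m. c i * h i)" unfolding c'_def by (intro sum.cong) auto
      show ?thesis by (simp only: sum.lessThan_Suc s1) (simp add: c'_def x_def)
    qed
    then have "a - (\<Sum>i<Suc m. c' i * h i) = coeff Q 0 - (\<Sum>i<m. c i * h i)"
      using a01 by simp
    moreover have "\<forall>i<Suc m. D (c' i) = 0" using c(1) \<open>D (coeff Q 1) = 0\<close>
      unfolding c'_def by (auto simp: less_Suc_eq)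
    ultimately show ?thesis using c(2) by metis
  qed
qed


lemma KO: "m \<le> N \<Longrightarrow> DI m \<and> LinInt m \<and> Ind k m h"
proof (induction m)
  case 0
  have "DI 0" unfolding DI_def
  proof (intro allI impI)
    fix J assume J: "J \<subseteq> A 0 \<and> (\<forall>a\<in>J. \<forall>b\<in>J. a + b \<in> J) \<and> (\<forall>a\<in>A 0. \<forall>b\<in>J. a * b \<in> J)
      \<and> (\<forall>a\<in>J. D a \<in> J) \<and> (\<exists>a\<in>J. a \<noteq> 0)"
    have JA: "J \<subseteq> k" and Jm: "\<forall>a\<in>k. \<forall>b\<in>J. a * b \<in> J" using J by simp_all
    obtain a where a: "a \<in> J" "a \<noteq> 0" using J by blast
    then have "a \<in> k" using JA by blast
    then have "inverse a \<in> k" by (rule k_inv)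
    then have "inverse a * a \<in> J" using Jm a by blast
    then show "1 \<in> J" using a by simp
  qed
  moreover have "LinInt 0" unfolding LinInt_def by simp
  moreover have "Ind k 0 h" unfolding Ind_def by simp
  ultimately show ?case by blast
next
  case (Suc m)
  then have m: "m < N" and IH: "DI m" "LinInt m" "Ind k m h" by auto
  show ?case using DI_Suc[OF m IH(1,2)] LI_Suc[OF m IH(1,2)] TI[OF m IH(1,2)] IH(3)
    by (simp add: Ind_Suc)
qed

lemma KO_Ind: "Ind k N h" using KO by blast

end


definition LS :: "'a::field set \<Rightarrow> nat \<Rightarrow> (nat \<Rightarrow> 'a) \<Rightarrow> 'a set" where
  "LS k N h = {a + (\<Sum>i<N. b i * h i) | a b. a \<in> k \<and> (\<forall>i<N. b i \<in> k)}"

context dfield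
begin

lemma LS_k: "a \<in> k \<Longrightarrow> a \<in> LS k N h"
  unfolding LS_def by (rule CollectI, rule exI[of _ a], rule exI[of _ "\<lambda>_. 0"])
    (simp add: sringD(1)[OF k_sring])

lemma LS_gen: "i < N \<Longrightarrow> h i \<in> LS k N h"
  unfolding LS_def
proof (rule CollectI, rule exI[of _ 0], rule exI[of _ "\<lambda>j. if j = i then 1 else 0"])
  assume i: "i < N"
  have "(\<Sum>j<N. (if j = i then 1 else 0) * h j) = (\<Sum>j<N. if j = i then h j else 0)"
    by (rule sum.cong) auto
  then have "(\<Sum>j<N. (if j = i then 1 else 0) * h j) = h i"
    using i by (simp add: sum.delta)
  then show "h i = 0 + (\<Sum>j<N. (if j = i then 1 else 0) * h j) \<and> 0 \<in> k \<and> (\<forall>j<N. (if j = i then 1 else 0) \<in> k)"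
    using sringD(1,2)[OF k_sring] by simp
qed

lemma LS_add: "y \<in> LS k N h \<Longrightarrow> z \<in> LS k N h \<Longrightarrow> y + z \<in> LS k N h"
proof -
  assume "y \<in> LS k N h" "z \<in> LS k N h"
  then obtain a b a' b' where y: "y = a + (\<Sum>i<N. b i * h i)" "a \<in> k" "\<forall>i<N. b i \<in> k"
    and z: "z = a' + (\<Sum>i<N. b' i * h i)" "a' \<in> k" "\<forall>i<N. b' i \<in> k"
    unfolding LS_def by blast
  have "y + z = (a + a') + (\<Sum>i<N. (b i + b' i) * h i)"
    using y z by (simp add: sum.distrib algebra_simps)
  then show ?thesis unfolding LS_def using y z
    by (intro CollectI exI[of _ "a + a'"] exI[of _ "\<lambda>i. b i + b' i"]) (auto intro: sringD[OF k_sring])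
qed

lemma LS_smult: "c \<in> k \<Longrightarrow> y \<in> LS k N h \<Longrightarrow> c * y \<in> LS k N h"
proof -
  assume c: "c \<in> k" and "y \<in> LS k N h"
  then obtain a b where y: "y = a + (\<Sum>i<N. b i * h i)" "a \<in> k" "\<forall>i<N. b i \<in> k"
    unfolding LS_def by blast
  have "c * y = c * a + (\<Sum>i<N. (c * b i) * h i)"
    using y by (simp add: sum_distrib_left algebra_simps)
  then show ?thesis unfolding LS_def using y c
    by (intro CollectI exI[of _ "c * a"] exI[of _ "\<lambda>i. c * b i"]) (auto intro: sringD[OF k_sring])
qed

lemma LS_neg: "y \<in> LS k N h \<Longrightarrow> - y \<in> LS k N h"
  using LS_smult[of "-1" y] sringD(2,5)[OF k_sring] by fastforce

lemma LS_diff: "y \<in> LS k N h \<Longrightarrow> z \<in> LS k N h \<Longrightarrow> y - z \<in> LS k N h"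
  using LS_add LS_neg by (metis diff_conv_add_uminus)

lemma LS_sum: "(\<And>j. j \<in> A \<Longrightarrow> c j \<in> k \<and> y j \<in> LS k N h) \<Longrightarrow> (\<Sum>j\<in>A. c j * y j) \<in> LS k N h"
proof (induction A rule: infinite_finite_induct)
  case (infinite A) then show ?case using LS_k sringD(1)[OF k_sring] by simp
next
  case empty then show ?case using LS_k sringD(1)[OF k_sring] by simp
next
  case (insert x F) then show ?case using LS_add LS_smult by simp
qed

lemma LS_sub:
  assumes "\<forall>i<N. h i \<in> LS k N' h'"
  shows "LS k N h \<subseteq> LS k N' h'"
proof
  fix y assume "y \<in> LS k N h"
  then obtain a b where y: "y = a + (\<Sum>i<N. b i * h i)" "a \<in> k" "\<forall>i<N. b i \<in> k"
    unfolding LS_def by blast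
  have "(\<Sum>i<N. b i * h i) \<in> LS k N' h'" using assms y(3) by (intro LS_sum) auto
  then show "y \<in> LS k N' h'" using y LS_add LS_k by simp
qed

lemma add_integral:
  assumes C: "Cind D k N h" and I: "\<forall>i<N. D (h i) \<in> k" and y: "D y \<in> k"
  shows "\<exists>N' h'. Cind D k N' h' \<and> (\<forall>i<N'. D (h' i) \<in> k) \<and> LS k N h \<subseteq> LS k N' h' \<and> y \<in> LS k N' h'"
proof (cases "Cind D k (Suc N) (h(N := y))")
  case True
  have "\<forall>i<N. h i \<in> LS k (Suc N) (h(N := y))"
    using LS_gen[of _ "Suc N" "h(N := y)"] by (metis fun_upd_other less_SucI less_irrefl_nat)
  then have "LS k N h \<subseteq> LS k (Suc N) (h(N := y))" by (rule LS_sub)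
  moreover have "y \<in> LS k (Suc N) (h(N := y))" using LS_gen[of N "Suc N" "h(N := y)"] by simp
  moreover have "\<forall>i<Suc N. D ((h(N := y)) i) \<in> k" using I y by (simp add: less_Suc_eq)
  ultimately show ?thesis using True by blast
next
  case False
  then obtain c where c: "\<forall>i<Suc N. c i \<in> constants D" "(\<Sum>i<Suc N. c i * (h(N := y)) i) \<in> k"
    "\<exists>i<Suc N. c i \<noteq> 0"
    unfolding Cind_def by blast
  have s: "(\<Sum>i<Suc N. c i * (h(N := y)) i) = (\<Sum>i<N. c i * h i) + c N * y"
    by (simp add: sum.lessThan_Suc)
  have cN: "c N \<noteq> 0"
  proof
    assume cN: "c N = 0"
    have "(\<Sum>i<Suc N. c i * (h(N := y)) i) = (\<Sum>i<N. c i * h i)" using s cN by simp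
    then have "(\<Sum>i<N. c i * h i) \<in> k" using c(2) by metis
    then have "\<forall>i<N. c i = 0" using C c(1) unfolding Cind_def by auto
    then show False using c(3) cN by (auto simp: less_Suc_eq)
  qed
  have cNk: "c N \<in> k" using c(1) cons by auto
  have ck: "c i \<in> k" if "i < N" for i using c(1) cons that by auto
  have "y = inverse (c N) * ((\<Sum>i<Suc N. c i * (h(N := y)) i) - (\<Sum>i<N. c i * h i))"
    using s cN by (simp add: field_simps)
  also have "\<dots> \<in> LS k N h"
    by (intro LS_smult LS_diff LS_k LS_sum k_inv cNk c(2)) (auto simp: ck LS_gen)
  finally show ?thesis using C I by blast
qed

lemma add_list:
  assumes "Cind D k N h" "\<forall>i<N. D (h i) \<in> k" "\<forall>j<(r::nat). D (H j) \<in> k"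
  shows "\<exists>N' h'. Cind D k N' h' \<and> (\<forall>i<N'. D (h' i) \<in> k) \<and> LS k N h \<subseteq> LS k N' h'
     \<and> (\<forall>j<r. H j \<in> LS k N' h')"
  using assms(3)
proof (induction r)
  case 0 then show ?case using assms(1,2) by blast
next
  case (Suc r)
  then obtain N1 h1 where 1: "Cind D k N1 h1" "\<forall>i<N1. D (h1 i) \<in> k" "LS k N h \<subseteq> LS k N1 h1"
    "\<forall>j<r. H j \<in> LS k N1 h1" by auto
  obtain N2 h2 where 2: "Cind D k N2 h2" "\<forall>i<N2. D (h2 i) \<in> k" "LS k N1 h1 \<subseteq> LS k N2 h2"
    "H r \<in> LS k N2 h2" using add_integral[OF 1(1,2), of "H r"] Suc.prems by auto
  show ?case using 1 2 by (intro exI[of _ N2] exI[of _ h2]) (auto simp: less_Suc_eq)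
qed

definition polyx :: "'a \<Rightarrow> 'a \<Rightarrow> bool" where
  "polyx x y \<longleftrightarrow> (\<exists>d c. (\<forall>i<d. D (c i) = 0) \<and> y = (\<Sum>i<d. c i * x ^ i))"

lemma polyx_k: "x \<in> k \<Longrightarrow> polyx x y \<Longrightarrow> y \<in> k"
  unfolding polyx_def using const_k
  by (auto intro!: sring_sum[OF k_sring] sringD(4)[OF k_sring] sring_power[OF k_sring])

lemma polyx_1: "polyx x 1"
  unfolding polyx_def by (rule exI[of _ 1], rule exI[of _ "\<lambda>_. 1"]) simp

lemma polyx_int:
  assumes Dx: "D x = 1" and "polyx x y"
  shows "\<exists>z. polyx x z \<and> D z = y"
proof -
  obtain d c where c: "\<forall>i<d. D (c i) = 0" "y = (\<Sum>i<d. c i * x ^ i)"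
    using assms(2) unfolding polyx_def by blast
  define c' where "c' i = (if i = 0 then 0 else c (i - 1) * inverse (of_nat i))" for i
  define z where "z = (\<Sum>i<Suc d. c' i * x ^ i)"
  have "polyx x z" unfolding polyx_def z_def
    by (rule exI[of _ "Suc d"], rule exI[of _ c'])
      (use c(1) in \<open>auto simp: c'_def D_mult D_inverse_const\<close>)
  moreover have "D z = y"
  proof -
    have "z = (\<Sum>i<d. c i * inverse (of_nat (Suc i)) * x ^ Suc i)"
      unfolding z_def by (subst sum.lessThan_Suc_shift) (simp add: c'_def)
    then have "D z = (\<Sum>i<d. D (c i * inverse (of_nat (Suc i)) * x ^ Suc i))"
      by (simp add: D_sum)
    also have "\<dots> = (\<Sum>i<d. c i * x ^ i)"
    proof (rule sum.cong)
      fix i assume "i \<in> {..<d}"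
      then have "D (c i) = 0" using c(1) by simp
      have e1: "D (x ^ Suc i) = of_nat (Suc i) * x ^ i" using D_power[of x i] Dx by simp
      have e2: "D (c i * inverse (of_nat (Suc i))) = 0" using \<open>D (c i) = 0\<close>
        by (simp add: D_mult D_inverse_const del: of_nat_Suc)
      have "D (c i * inverse (of_nat (Suc i)) * x ^ Suc i) = c i * inverse (of_nat (Suc i)) * D (x ^ Suc i)"
        using D_mult[of "c i * inverse (of_nat (Suc i))" "x ^ Suc i"] e2 by simp
      also have "\<dots> = c i * x ^ i" by (simp only: e1) (simp del: of_nat_Suc)
      finally show "D (c i * inverse (of_nat (Suc i)) * x ^ Suc i) = c i * x ^ i" .
    qed simp
    finally show ?thesis using c(2) by simp
  qed
  ultimately show ?thesis by blast
qed

lemma integ_rep: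
  assumes xk: "x \<in> k" and Dx: "D x = 1"
  shows "(D ^^ m) g \<in> k \<Longrightarrow> \<exists>(r::nat) H p. (\<forall>j<r. D (H j) \<in> k \<and> polyx x (p j)) \<and> g = (\<Sum>j<r. p j * H j)"
proof (induction m arbitrary: g)
  case 0
  then show ?case
    by (intro exI[of _ 1] exI[of _ "\<lambda>_. g"] exI[of _ "\<lambda>_. 1"]) (auto simp: k_D polyx_1)
next
  case (Suc m)
  have "(D ^^ m) (D g) \<in> k" using Suc.prems by (simp add: funpow_Suc_right del: funpow.simps)
  then obtain r :: nat and H p where rp: "\<forall>j<r. D (H j) \<in> k \<and> polyx x (p j)" "D g = (\<Sum>j<r. p j * H j)"
    using Suc.IH by blast
  have "\<forall>j<r. \<exists>z. polyx x z \<and> D z = p j" using rp(1) polyx_int[OF Dx] by blast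
  then obtain z where z: "\<forall>j<r. polyx x (z j) \<and> D (z j) = p j" by metis
  define G where "G = (\<Sum>j<r. z j * H j)"
  have "D G = (\<Sum>j<r. p j * H j) + (\<Sum>j<r. z j * D (H j))"
    unfolding G_def using z by (simp add: D_sum D_mult sum.distrib)
  then have DgG: "D (g - G) = - (\<Sum>j<r. z j * D (H j))" using rp(2) by (simp add: D_diff)
  have "(\<Sum>j<r. z j * D (H j)) \<in> k" using z rp(1) polyx_k[OF xk]
    by (auto intro!: sring_sum[OF k_sring] sringD(4)[OF k_sring])
  then have Dk: "D (g - G) \<in> k" using DgG sringD(5)[OF k_sring] by simp
  define H' where "H' = H(r := g - G)"
  define p' where "p' = z(r := 1)"
  have "(\<Sum>j<Suc r. p' j * H' j) = (\<Sum>j<r. p' j * H' j) + (g - G)" by (simp add: p'_def H'_def)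
  also have "(\<Sum>j<r. p' j * H' j) = G" unfolding G_def p'_def H'_def by (intro sum.cong) auto
  finally have "g = (\<Sum>j<Suc r. p' j * H' j)" by simp
  moreover have "\<forall>j<Suc r. D (H' j) \<in> k \<and> polyx x (p' j)"
    using rp(1) z Dk polyx_1 by (auto simp: H'_def p'_def less_Suc_eq)
  ultimately show ?case by blast
qed

lemma basis:
  assumes xk: "x \<in> k" and Dx: "D x = 1" and it: "\<forall>i<(n::nat). \<exists>m::nat. (D ^^ m) (f i) \<in> k"
  shows "\<exists>N h. Cind D k N h \<and> (\<forall>i<N. D (h i) \<in> k) \<and> (\<forall>i<n. f i \<in> LS k N h)"
  using it
proof (induction n)
  case 0
  have "Cind D k 0 h" for h unfolding Cind_def by simp
  then show ?case by blast
next
  case (Suc n)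
  then obtain N h where 1: "Cind D k N h" "\<forall>i<N. D (h i) \<in> k" "\<forall>i<n. f i \<in> LS k N h" by auto
  obtain m where "(D ^^ m) (f n) \<in> k" using Suc.prems by blast
  then obtain r :: nat and H p where rp: "\<forall>j<r. D (H j) \<in> k \<and> polyx x (p j)" "f n = (\<Sum>j<r. p j * H j)"
    using integ_rep[OF xk Dx] by blast
  obtain N' h' where 2: "Cind D k N' h'" "\<forall>i<N'. D (h' i) \<in> k" "LS k N h \<subseteq> LS k N' h'"
    "\<forall>j<r. H j \<in> LS k N' h'" using add_list[OF 1(1,2), of r H] rp(1) by auto
  have "f n \<in> LS k N' h'" unfolding rp(2) using rp(1) 2(4) polyx_k[OF xk] by (intro LS_sum) auto
  then show ?case using 1 2 by (intro exI[of _ N'] exI[of _ h']) (auto simp: less_Suc_eq)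
qed

end


lemma Ind_shift:
  assumes k: "sring k"
  shows "\<forall>G. d + n \<le> N \<longrightarrow> Ind k N G \<longrightarrow> (\<forall>i<n. G (d + i) = f i) \<longrightarrow> Ind k n f"
proof (induction d)
  case 0
  show ?case
  proof (intro allI impI)
    fix G assume a: "0 + n \<le> N" "Ind k N G" "\<forall>i<n. G (0 + i) = f i"
    then have "Ind k n G" using Ind_prefix by simp
    moreover have "Ind k n G = Ind k n f" using a(3) by (intro Ind_cong) simp
    ultimately show "Ind k n f" by simp
  qed
next
  case (Suc d)
  show ?case
  proof (intro allI impI)
    fix G assume a: "Suc d + n \<le> N" "Ind k N G" "\<forall>i<n. G (Suc d + i) = f i"
    have I: "Ind k N (rot 0 N G)" using Ind_rot[OF k a(2)] a(1) by simp
    have "\<forall>i<n. rot 0 N G (d + i) = f i" using a(1,3) by (auto simp: rot_def)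
    then show "Ind k n f" using Suc.IH I a(1) by auto
  qed
qed

lemma Ind_indep:
  assumes k: "sring k"
  shows "Ind k n f \<Longrightarrow> \<forall>S c. finite S \<and> (\<forall>e\<in>S. \<forall>i\<ge>n. e i = 0) \<and> (\<forall>e\<in>S. c e \<in> k)
      \<and> (\<Sum>e\<in>S. c e * (\<Prod>i<n. f i ^ e i)) = 0 \<longrightarrow> (\<forall>e\<in>S. c e = 0)"
proof (induction n)
  case 0
  show ?case
  proof (intro allI impI)
    fix S and c :: "(nat \<Rightarrow> nat) \<Rightarrow> 'a"
    assume a: "finite S \<and> (\<forall>e\<in>S. \<forall>i\<ge>0. e i = 0) \<and> (\<forall>e\<in>S. c e \<in> k) \<and> (\<Sum>e\<in>S. c e * (\<Prod>i<0. f i ^ e i)) = 0"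
    then have "S \<subseteq> {\<lambda>_. 0}" by auto
    then have "S = {} \<or> S = {\<lambda>_. 0}" by auto
    then show "\<forall>e\<in>S. c e = 0" using a by auto
  qed
next
  case (Suc n)
  have In: "Ind k n f" and tr: "transc (Aset k f n) (f n)" using Suc.prems by (auto simp: Ind_Suc)
  note IH = Suc.IH[OF In]
  show ?case
  proof (intro allI impI)
    fix S and c :: "(nat \<Rightarrow> nat) \<Rightarrow> 'a"
    assume a: "finite S \<and> (\<forall>e\<in>S. \<forall>i\<ge>Suc n. e i = 0) \<and> (\<forall>e\<in>S. c e \<in> k)
      \<and> (\<Sum>e\<in>S. c e * (\<Prod>i<Suc n. f i ^ e i)) = 0"
    have fin: "finite S" and sup: "\<forall>e\<in>S. \<forall>i\<ge>Suc n. e i = 0" and ck: "\<forall>e\<in>S. c e \<in> k"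
      and sum0: "(\<Sum>e\<in>S. c e * (\<Prod>i<Suc n. f i ^ e i)) = 0" using a by auto
    define mon where "mon e = (\<Prod>i<n. f i ^ e i)" for e :: "nat \<Rightarrow> nat"
    define T where "T = (\<lambda>e. e n) ` S"
    define q where "q d = (\<Sum>e\<in>{e\<in>S. e n = d}. c e * mon e)" for d
    define Q where "Q = (\<Sum>d\<in>T. monom (q d) d)"
    have finT: "finite T" unfolding T_def using fin by simp
    have "poly Q (f n) = (\<Sum>d\<in>T. q d * f n ^ d)" unfolding Q_def by (simp add: poly_sum poly_monom)
    also have "\<dots> = (\<Sum>d\<in>T. \<Sum>e\<in>{e\<in>S. e n = d}. c e * mon e * f n ^ e n)"
      unfolding q_def by (intro sum.cong refl) (auto simp: sum_distrib_right)
    also have "\<dots> = (\<Sum>e\<in>S. c e * mon e * f n ^ e n)"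
      by (rule sum.group[OF fin finT]) (auto simp: T_def)
    also have "\<dots> = 0" using sum0 by (simp add: mon_def mult.assoc)
    finally have pQ: "poly Q (f n) = 0" .
    have cQ: "coeff Q d = (if d \<in> T then q d else 0)" for d
      unfolding Q_def by (simp add: coeff_sum sum.delta' finT)
    have sA: "sring (Aset k f n)" by (rule Aset_sring[OF k])
    have qA: "q d \<in> Aset k f n" for d
      unfolding q_def mon_def using ck Aset_base[OF k, of f n]
      by (intro sring_sum[OF sA] sringD(4)[OF sA] sring_prod[OF sA] sring_power[OF sA] Aset_gen[OF k]) auto
    have "\<forall>i. coeff Q i \<in> Aset k f n" using qA sringD(1)[OF sA] cQ by simp
    then have "Q = 0" using tr pQ unfolding transc_def by blast
    then have qz: "q d = 0" if "d \<in> T" for d using cQ[of d] that by simp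
    show "\<forall>e\<in>S. c e = 0"
    proof
      fix e0 assume e0: "e0 \<in> S"
      define d where "d = e0 n"
      define Sd where "Sd = {e\<in>S. e n = d}"
      define S' where "S' = (\<lambda>e. e(n := 0)) ` Sd"
      define c' where "c' e = c (e(n := d))" for e
      have inj: "inj_on (\<lambda>e. e(n := 0)) Sd"
      proof (rule inj_onI)
        fix x y assume xy: "x \<in> Sd" "y \<in> Sd" "x(n := 0) = y(n := 0)"
        show "x = y"
        proof (rule ext)
          fix i show "x i = y i"
          proof (cases "i = n")
            case True then show ?thesis using xy(1,2) unfolding Sd_def by simp
          next
            case False then show ?thesis using fun_cong[OF xy(3), of i] by simp
          qed
        qed
      qed
      have "(\<Sum>e\<in>S'. c' e * (\<Prod>i<n. f i ^ e i)) = (\<Sum>e\<in>Sd. c' (e(n := 0)) * (\<Prod>i<n. f i ^ (e(n := 0)) i))"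
        unfolding S'_def by (rule sum.reindex[OF inj, unfolded comp_def])
      also have "\<dots> = (\<Sum>e\<in>Sd. c e * mon e)"
        unfolding mon_def c'_def Sd_def by (intro sum.cong refl) (auto intro!: prod.cong)
      also have "\<dots> = 0" using qz[of d] e0 unfolding q_def Sd_def d_def T_def by auto
      finally have s0: "(\<Sum>e\<in>S'. c' e * (\<Prod>i<n. f i ^ e i)) = 0" .
      have "finite S'" unfolding S'_def Sd_def using fin by simp
      moreover have "\<forall>e\<in>S'. \<forall>i\<ge>n. e i = 0" unfolding S'_def Sd_def using sup
        by (auto simp: Suc_le_eq le_neq_implies_less)
      moreover have "\<forall>e\<in>S'. c' e \<in> k" unfolding S'_def Sd_def c'_def using ck
        by (auto simp: fun_upd_idem)
      ultimately have "\<forall>e\<in>S'. c' e = 0" using IH s0 by blast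
      moreover have "e0(n := 0) \<in> S'" unfolding S'_def Sd_def d_def using e0 by auto
      moreover have "(e0(n := 0))(n := e0 n) = e0" by simp
      ultimately show "c e0 = 0" unfolding c'_def d_def by metis
    qed
  qed
qed

lemma Ind_not_dep: "sring k \<Longrightarrow> Ind k n f \<Longrightarrow> \<not> alg_dependent k n f"
  unfolding alg_dependent_def using Ind_indep by blast


lemma rot_lt: "p < N - 1 \<Longrightarrow> rot m N G p = G (if p < m then p else Suc p)"
  by (simp add: rot_def)

lemma rot_last: "m < N \<Longrightarrow> rot m N G (N - 1) = G m"
proof -
  assume "m < N"
  then have "\<not> N - 1 < m" by linarith
  then show ?thesis by (simp add: rot_def)
qed

lemma rot_hit: "m < N \<Longrightarrow> i < N \<Longrightarrow> i \<noteq> m \<Longrightarrow> \<exists>p<N - 1. rot m N G p = G i"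
proof -
  assume a: "m < N" "i < N" "i \<noteq> m"
  show ?thesis
  proof (cases "i < m")
    case True then show ?thesis using a by (intro exI[of _ i]) (auto simp: rot_def)
  next
    case False
    then have "i - 1 < N - 1" "\<not> i - 1 < m" "Suc (i - 1) = i" using a by auto
    then show ?thesis by (intro exI[of _ "i - 1"]) (auto simp: rot_def)
  qed
qed

context dfield
begin

lemma steinitz:
  assumes I: "Ind k N h" and F: "\<forall>i<n. f i \<in> LS k N h"
    and NR: "\<forall>u. (\<forall>i<n. u i \<in> k) \<and> (\<Sum>i<n. u i * f i) \<in> k \<longrightarrow> (\<forall>i<n. u i = 0)"
  shows "Ind k n f"
proof -
  have P: "\<exists>G. Ind k N G \<and> (\<forall>i<j. G (N - j + i) = f i) \<and> (\<forall>i<n. f i \<in> LS k N G) \<and> j \<le> N"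
    if "j \<le> n" for j
    using that
  proof (induction j)
    case 0 show ?case using I F by auto
  next
    case (Suc j)
    then obtain G where G: "Ind k N G" "\<forall>i<j. G (N - j + i) = f i" "\<forall>i<n. f i \<in> LS k N G" "j \<le> N"
      by auto
    have jn: "j < n" using Suc.prems by simp
    obtain a \<beta> where fj: "f j = a + (\<Sum>i<N. \<beta> i * G i)" "a \<in> k" "\<forall>i<N. \<beta> i \<in> k"
      using G(3) jn unfolding LS_def by blast
    have "\<exists>m<N - j. \<beta> m \<noteq> 0"
    proof (rule ccontr)
      assume "\<not> (\<exists>m<N - j. \<beta> m \<noteq> 0)"
      then have z: "\<forall>m<N - j. \<beta> m = 0" by auto
      have "(\<Sum>i<N. \<beta> i * G i) = (\<Sum>i\<in>{N - j..<N}. \<beta> i * G i)"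
        by (rule sum.mono_neutral_right) (use z in auto)
      also have "\<dots> = (\<Sum>i<j. \<beta> (N - j + i) * G (N - j + i))"
        by (rule sum.reindex_bij_witness[of _ "\<lambda>i. N - j + i" "\<lambda>i. i - (N - j)"]) (use G(4) in auto)
      also have "\<dots> = (\<Sum>i<j. \<beta> (N - j + i) * f i)"
        using G(2) by (intro sum.cong) auto
      finally have e: "(\<Sum>i<N. \<beta> i * G i) = (\<Sum>i<j. \<beta> (N - j + i) * f i)" .
      define u where "u i = (if i < j then \<beta> (N - j + i) else if i = j then -1 else 0)" for i
      have "(\<Sum>i<n. u i * f i) = (\<Sum>i<Suc j. u i * f i)"
        by (rule sum.mono_neutral_right) (use jn in \<open>auto simp: u_def\<close>)
      also have "\<dots> = (\<Sum>i<j. u i * f i) - f j" by (simp add: u_def)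
      also have "(\<Sum>i<j. u i * f i) = (\<Sum>i<j. \<beta> (N - j + i) * f i)"
        by (intro sum.cong) (auto simp: u_def)
      finally have "(\<Sum>i<n. u i * f i) = - a" using fj(1) e by simp
      then have "(\<Sum>i<n. u i * f i) \<in> k" using fj(2) sringD(5)[OF k_sring] by simp
      moreover have "\<forall>i<n. u i \<in> k"
        using fj(3) G(4) sringD(1,2,5)[OF k_sring] by (auto simp: u_def)
      ultimately have "u j = 0" using NR jn by blast
      then show False by (simp add: u_def)
    qed
    then obtain m where m: "m < N - j" "\<beta> m \<noteq> 0" by blast
    define G' where "G' = rot m N G"
    define G'' where "G'' = G'(N - 1 := f j)"
    have mN: "m < N" using m by simp
    have I': "Ind k N G'" using Ind_rot[OF k_sring G(1) mN] G'_def by simp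
    define rest where "rest = a + (\<Sum>i\<in>{..<N} - {m}. \<beta> i * G i)"
    have "(\<Sum>i<N. \<beta> i * G i) = \<beta> m * G m + (\<Sum>i\<in>{..<N} - {m}. \<beta> i * G i)"
      using mN by (subst sum.remove[of _ m]) auto
    moreover have G'l: "G' (N - 1) = G m" unfolding G'_def by (rule rot_last[OF mN])
    ultimately have fj2: "f j = \<beta> m * G' (N - 1) + rest"
      using fj(1) unfolding rest_def by simp
    have sA: "sring (Aset k G' (N - 1))" by (rule Aset_sring[OF k_sring])
    have kA: "k \<subseteq> Aset k G' (N - 1)" by (rule Aset_base[OF k_sring])
    have GA: "G i \<in> Aset k G' (N - 1)" if iN: "i < N" and im: "i \<noteq> m" for i
    proof -
      obtain p where "p < N - 1" "G' p = G i" using rot_hit[OF mN iN im] G'_def by blast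
      then show ?thesis using Aset_gen[OF k_sring, of p "N - 1" G'] by simp
    qed
    have restA: "rest \<in> Aset k G' (N - 1)"
      unfolding rest_def using fj(2,3) kA GA
      by (intro sringD(3)[OF sA] sring_sum[OF sA] sringD(4)[OF sA]) auto
    have tr: "transc (Aset k G' (N - 1)) (G' (N - 1))" using I' mN unfolding Ind_def by simp
    have tf: "transc (Aset k G' (N - 1)) (f j)"
      using transc_affine[OF sA tr, of "\<beta> m" rest] fj(3) mN kA restA m(2) fj2 by auto
    have I'': "Ind k N G''" unfolding Ind_def
    proof (intro allI impI)
      fix p assume p: "p < N"
      have AG: "Aset k G'' p = Aset k G' p" if "p \<le> N - 1"
        using that by (intro Aset_cong) (auto simp: G''_def)
      show "transc (Aset k G'' p) (G'' p)"
      proof (cases "p = N - 1")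
        case True then show ?thesis using AG tf by (simp add: G''_def)
      next
        case False then show ?thesis using AG I' p unfolding Ind_def by (simp add: G''_def)
      qed
    qed
    have pos: "\<forall>i<Suc j. G'' (N - Suc j + i) = f i"
    proof (intro allI impI)
      fix i assume i: "i < Suc j"
      show "G'' (N - Suc j + i) = f i"
      proof (cases "i = j")
        case True
        then have "N - Suc j + i = N - 1" using m by simp
        then show ?thesis using True by (simp add: G''_def)
      next
        case False
        then have ij: "i < j" using i by simp
        have lt: "N - Suc j + i < N - 1" using ij m by simp
        have "G'' (N - Suc j + i) = G' (N - Suc j + i)" using lt by (simp add: G''_def)
        also have "\<dots> = G (Suc (N - Suc j + i))"
        proof -
          have nm: "\<not> N - Suc j + i < m" using m by linarith
          show ?thesis unfolding G'_def rot_lt[OF lt] using nm by (simp only: if_False)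
        qed
        also have "Suc (N - Suc j + i) = N - j + i" using m by simp
        finally show ?thesis using G(2) ij by simp
      qed
    qed
    have GL: "G i \<in> LS k N G''" if iN: "i < N" and im: "i \<noteq> m" for i
    proof -
      obtain p where "p < N - 1" "G' p = G i" using rot_hit[OF mN iN im] G'_def by blast
      then have "G'' p = G i" by (simp add: G''_def)
      then show ?thesis using LS_gen[of p N G''] \<open>p < N - 1\<close> by simp
    qed
    have restL: "rest \<in> LS k N G''"
      unfolding rest_def using fj(2,3) GL by (intro LS_add LS_k LS_sum) auto
    have fjL: "f j \<in> LS k N G''" using LS_gen[of "N - 1" N G''] mN by (simp add: G''_def)
    have "G m = inverse (\<beta> m) * (f j - rest)"
      using fj2 m(2) G'l by (simp add: field_simps)
    also have "\<dots> \<in> LS k N G''"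
      by (intro LS_smult LS_diff k_inv fjL restL) (use fj(3) mN in auto)
    finally have GmL: "G m \<in> LS k N G''" .
    have "\<forall>i<N. G i \<in> LS k N G''" using GL GmL by blast
    then have "LS k N G \<subseteq> LS k N G''" by (rule LS_sub)
    then show ?case using I'' pos G(3) m by (intro exI[of _ G'']) auto
  qed
  obtain G where G: "Ind k N G" "\<forall>i<n. G (N - n + i) = f i" "n \<le> N"
    using P[of n] by auto
  show ?thesis using Ind_shift[OF k_sring, of "N - n" n N f] G by auto
qed

end

theorem proposition34:
  fixes D :: "'a::field_char_0 \<Rightarrow> 'a" and k :: "'a set" and f :: "nat \<Rightarrow> 'a" and n :: nat
  assumes "derivation D"
    and "differential_subfield D k"
    and "constants D \<subseteq> k"
    and "alg_closed_set (constants D)"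
    and "\<exists>x\<in>k. D x = 1"
    and "\<forall>i<n. iterated_integral D k (f i)"
    and "alg_dependent k n f"
  shows "\<exists>u :: nat \<Rightarrow> 'a. (\<forall>i<n. u i \<in> k) \<and> (\<exists>i<n. u i \<noteq> 0) \<and> (\<Sum>i<n. u i * f i) \<in> k"
proof (rule ccontr)
  assume nu: "\<not> ?thesis"
  interpret dfield D k using assms(1-3) by unfold_locales
  obtain x where x: "x \<in> k" "D x = 1" using assms(5) by blast
  have NR: "\<forall>u. (\<forall>i<n. u i \<in> k) \<and> (\<Sum>i<n. u i * f i) \<in> k \<longrightarrow> (\<forall>i<n. u i = 0)"
    using nu by blast
  have it: "\<forall>i<n. \<exists>m::nat. (D ^^ m) (f i) \<in> k"
    using assms(6) unfolding iterated_integral_def by blast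
  obtain N h where Nh: "Cind D k N h" "\<forall>i<N. D (h i) \<in> k" "\<forall>i<n. f i \<in> LS k N h"
    using basis[OF x it] by blast
  interpret ko D k h N using Nh(1,2) by unfold_locales auto
  have "Ind k N h" by (rule KO_Ind)
  then have "Ind k n f" using steinitz Nh(3) NR by blast
  then show False using Ind_not_dep[OF k_sring] assms(7) by blast
qed

end
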